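(* Let $2\le p\le q$, $n=p+q$. Let $W_1,\ldots,W_l \subset \mathbb{R}^{p,q}$ be a finite family of pairwise distinct, non-empty open sets of intersection type. Then $W_1 \cup \cdots \cup W_l$ is not connected if and only if one of the following holds: (1) there exist $v \in \mathcal{C} \setminus \{0\}$, real numbers $\alpha_1,\ldots,\alpha_l$ and $1 \leq k_0 \leq l-1$ such that, up to permutation of the indices, $\alpha_1 > \cdots > \alpha_{k_0} \geq \alpha_{k_0+1} > \cdots > \alpha_l$, $W_i = H_{v,\alpha_i}$ for all $i \leq k_0$ and $W_i = H_{-v,-\alpha_i}$ for all $i > k_0$; or (2) $l=2$ and, up to permutation, $W_1 = v + U_S$ and $W_2 = v + U_T$ for some $v \in \mathbb{R}^{p,q}$.
   Context: On $\mathbb{R}^{p,q}$: $b(v,w) = -v_1w_1 - \cdots - v_pw_p + v_{p+1}w_{p+1} + \cdots + v_nw_n$, $q(v)=b(v,v)$, $\mathcal{C}=\{q=0\}$, $U_S=\{q>0\}$, $U_T=\{q<0\}$, and for $v\in\mathcal{C}\setminus\{0\}$, $\alpha\in\mathbb{R}$, $H_{v,\alpha}=\{w: b(v,w)>\alpha\}$. An open subset of $\mathbb{R}^{p,q}$ is of intersection type if it is of the form $v_0+U_S$ or $v_0+U_T$ for some $v_0\in\mathbb{R}^{p,q}$, or $H_{v_0,\alpha}$ for some $v_0\in\mathcal{C}\setminus\{0\}$ and $\alpha\in\mathbb{R}$. *)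

theory Defs
  imports "HOL-Analysis.Analysis"
begin

text \<open>R^{p,q} is modelled as real ^ ('p + 'q): the coordinates Inl i (i :: 'p) are the
  p negative ones, the coordinates Inr j (j :: 'q) the q positive ones; p = CARD('p), q = CARD('q).\<close>

definition bpq :: "real ^ ('p::finite + 'q::finite) \<Rightarrow> real ^ ('p + 'q) \<Rightarrow> real" where
  "bpq v w = - (\<Sum>i\<in>UNIV. v $ Inl i * w $ Inl i) + (\<Sum>j\<in>UNIV. v $ Inr j * w $ Inr j)"

definition qpq :: "real ^ ('p::finite + 'q::finite) \<Rightarrow> real" where
  "qpq v = bpq v v"

definition lightcone :: "(real ^ ('p::finite + 'q::finite)) set" where
  "lightcone = {v. qpq v = 0}"

definition U_S :: "(real ^ ('p::finite + 'q::finite)) set" where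
  "U_S = {v. qpq v > 0}"

definition U_T :: "(real ^ ('p::finite + 'q::finite)) set" where
  "U_T = {v. qpq v < 0}"

definition Hpq :: "real ^ ('p::finite + 'q::finite) \<Rightarrow> real \<Rightarrow> (real ^ ('p + 'q)) set" where
  "Hpq v \<alpha> = {w. bpq v w > \<alpha>}"

definition intersection_type :: "(real ^ ('p::finite + 'q::finite)) set \<Rightarrow> bool" where
  "intersection_type W \<longleftrightarrow>
     (\<exists>v0. W = (\<lambda>u. v0 + u) ` U_S \<or> W = (\<lambda>u. v0 + u) ` U_T) \<or>
     (\<exists>v0 \<alpha>. v0 \<in> lightcone - {0} \<and> W = Hpq v0 \<alpha>)"

end

theory Submission
  imports Defs
begin


lemma sum_UNIV_Plus:
  "(\<Sum>k\<in>(UNIV::('a::finite+'b::finite) set). f k) = (\<Sum>i\<in>UNIV. f (Inl i)) + (\<Sum>j\<in>UNIV. f (Inr j))"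
  by (subst UNIV_Plus_UNIV[symmetric], subst sum.Plus) (auto simp: o_def)

definition Nn :: "real ^ ('p::finite + 'q::finite) \<Rightarrow> real" where
  "Nn z = (\<Sum>i\<in>UNIV. (z $ Inl i)^2)"
definition Pp :: "real ^ ('p::finite + 'q::finite) \<Rightarrow> real" where
  "Pp z = (\<Sum>j\<in>UNIV. (z $ Inr j)^2)"

lemma qpq_NP: "qpq z = Pp z - Nn z"
  by (simp add: qpq_def bpq_def Pp_def Nn_def power2_eq_square)

lemma Nn_ge0: "Nn z \<ge> 0" by (simp add: Nn_def sum_nonneg)
lemma Pp_ge0: "Pp z \<ge> 0" by (simp add: Pp_def sum_nonneg)

lemma bpq_sym: "bpq v w = bpq w v"
  by (simp add: bpq_def mult.commute)
lemma bpq_add_left: "bpq (v + v') w = bpq v w + bpq v' w"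
  by (simp add: bpq_def algebra_simps sum.distrib)
lemma bpq_add_right: "bpq w (v + v') = bpq w v + bpq w v'"
  by (simp add: bpq_def algebra_simps sum.distrib)
lemma bpq_scale_left: "bpq (c *\<^sub>R v) w = c * bpq v w"
  by (simp add: bpq_def algebra_simps sum_distrib_left)
lemma bpq_scale_right: "bpq w (c *\<^sub>R v) = c * bpq w v"
  by (simp add: bpq_def algebra_simps sum_distrib_left)
lemma bpq_minus_left: "bpq (- v) w = - bpq v w"
  by (simp add: bpq_def sum_negf)
lemma bpq_minus_right: "bpq w (- v) = - bpq w v"
  by (simp add: bpq_def sum_negf)
lemma bpq_diff_left: "bpq (v - v') w = bpq v w - bpq v' w"
  using bpq_add_left[of v "-v'" w] bpq_minus_left[of v' w] by simp
lemma bpq_diff_right: "bpq w (v - v') = bpq w v - bpq w v'"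
  using bpq_add_right[of w v "-v'"] bpq_minus_right[of w v'] by simp

lemma qpq_add: "qpq (x + y) = qpq x + 2 * bpq x y + qpq y"
  unfolding qpq_def bpq_add_left bpq_add_right using bpq_sym[of y x] by simp

lemma qpq_scale: "qpq (c *\<^sub>R x) = c^2 * qpq x"
  unfolding qpq_def bpq_scale_left bpq_scale_right by (simp add: power2_eq_square)

definition Jv :: "real ^ ('p::finite + 'q::finite) \<Rightarrow> real ^ ('p + 'q)" where
  "Jv u = (\<chi> k. case k of Inl i \<Rightarrow> - u $ k | Inr j \<Rightarrow> u $ k)"

lemma bpq_Jv: "bpq x (Jv u) = x \<bullet> u"
  by (simp add: bpq_def Jv_def inner_vec_def sum_UNIV_Plus sum_negf)

lemma inner_self_NP: "x \<bullet> x = Nn x + Pp x"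
  by (simp add: inner_vec_def sum_UNIV_Plus Nn_def Pp_def power2_eq_square)

lemma lightcone_NP: "v \<in> lightcone \<longleftrightarrow> Nn v = Pp v"
  by (auto simp: lightcone_def qpq_NP)

lemma null_pos: assumes "v \<in> lightcone - {0}" shows "Nn v > 0" "Pp v > 0"
proof -
  have "Nn v = Pp v" using assms lightcone_NP by blast
  moreover have "x \<bullet> x > 0" if "x \<noteq> 0" for x :: "real^('a::finite+'b::finite)" using that by simp
  hence "Nn v + Pp v > 0" using assms inner_self_NP by (metis DiffE singletonI)
  ultimately show "Nn v > 0" "Pp v > 0" by auto
qed

lemma trans_image: "(\<lambda>u. v0 + u) ` S = {x. x - v0 \<in> S}" for v0 :: "'a::ab_group_add"
  apply (auto simp: image_iff)
  apply (rule_tac x="x - v0" in bexI) by auto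

definition ET :: "real^'p \<Rightarrow> real ^ ('p::finite + 'q::finite)" where
  "ET x = (\<chi> k. case k of Inl i \<Rightarrow> x $ i | Inr j \<Rightarrow> 0)"
definition PT :: "real ^ ('p::finite + 'q::finite) \<Rightarrow> real ^ ('p + 'q)" where
  "PT z = (\<chi> k. case k of Inl i \<Rightarrow> z $ k | Inr j \<Rightarrow> 0)"

lemma linear_ET: "linear (ET :: real^'p \<Rightarrow> real ^ ('p::finite + 'q::finite))"
  by (auto simp: linear_iff vec_eq_iff ET_def split: sum.split)

lemma connected_U_T:
  assumes "2 \<le> CARD('p)"
  shows "connected (U_T :: (real ^ ('p::finite + 'q::finite)) set)"
proof -
  let ?A = "(ET :: real^'p \<Rightarrow> real ^ ('p + 'q)) ` (- {0})"
  have cA: "connected ?A"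
    apply (rule connected_continuous_image)
     apply (rule linear_continuous_on)
    using linear_ET linear_conv_bounded_linear apply blast
    apply (rule connected_punctured_universe) using assms by simp
  have AU: "?A \<subseteq> U_T"
  proof
    fix y assume "y \<in> ?A"
    then obtain x :: "real^'p" where x: "x \<noteq> 0" "y = ET x" by auto
    have "Nn y = x \<bullet> x" by (simp add: x Nn_def ET_def inner_vec_def power2_eq_square)
    moreover have "Pp y = 0" by (simp add: x Pp_def ET_def)
    ultimately show "y \<in> U_T" using x by (simp add: U_T_def qpq_NP)
  qed
  have "(1::real^'p) \<noteq> 0" by (simp add: vec_eq_iff)
  hence Ane: "?A \<noteq> {}" by blast 
  define F where "F = (\<lambda>z. closed_segment z (PT z) \<union> ?A) ` U_T"
  have seg: "closed_segment z (PT z) \<subseteq> U_T" if z: "z \<in> U_T" for z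
  proof
    fix y assume "y \<in> closed_segment z (PT z)"
    then obtain u where u: "0 \<le> u" "u \<le> 1" "y = (1 - u) *\<^sub>R z + u *\<^sub>R PT z"
      by (auto simp: closed_segment_def)
    have "Nn y = Nn z" by (simp add: u Nn_def PT_def algebra_simps)
    moreover have "Pp y = (1-u)^2 * Pp z"
      by (simp add: u Pp_def PT_def sum_distrib_left power_mult_distrib)
    moreover have "(1-u)^2 \<le> 1" using u by (simp add: power_le_one)
    moreover have "Pp z < Nn z" using z by (simp add: U_T_def qpq_NP)
    ultimately have "Pp y < Nn y" using Pp_ge0[of z] mult_left_le_one_le[of "Pp z" "(1-u)^2"]
      by simp
    thus "y \<in> U_T" by (simp add: U_T_def qpq_NP)
  qed
  have PTA: "PT z \<in> ?A" if z: "z \<in> U_T" for z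
  proof -
    have "PT z = ET (\<chi> i. z $ Inl i)" by (simp add: PT_def ET_def vec_eq_iff split: sum.split)
    moreover have "(\<chi> i. z $ Inl i) \<noteq> (0::real^'p)"
    proof
      assume h: "(\<chi> i. z $ Inl i) = (0::real^'p)"
      have "Nn z = 0" using h by (simp add: Nn_def vec_eq_iff)
      thus False using z Pp_ge0[of z] by (simp add: U_T_def qpq_NP)
    qed
    ultimately show ?thesis by auto
  qed
  have "connected (\<Union>F)"
  proof (rule connected_Union)
    fix s assume "s \<in> F"
    then obtain z where z: "z \<in> U_T" "s = closed_segment z (PT z) \<union> ?A" by (auto simp: F_def)
    show "connected s" unfolding z(2)
      by (rule connected_Un[OF connected_segment cA]) (use PTA[OF z(1)] in auto)
  next
    have "?A \<subseteq> \<Inter>F" by (auto simp: F_def)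
    thus "\<Inter>F \<noteq> {}" using Ane by blast
  qed
  moreover have "\<Union>F = U_T"
  proof
    show "\<Union>F \<subseteq> U_T" using seg AU by (auto simp: F_def)
    show "U_T \<subseteq> \<Union>F" unfolding F_def by (auto intro: ends_in_segment)
  qed
  ultimately show ?thesis by metis
qed

definition ES :: "real^'q \<Rightarrow> real ^ ('p::finite + 'q::finite)" where
  "ES x = (\<chi> k. case k of Inl i \<Rightarrow> 0 | Inr j \<Rightarrow> x $ j)"
definition PS :: "real ^ ('p::finite + 'q::finite) \<Rightarrow> real ^ ('p + 'q)" where
  "PS z = (\<chi> k. case k of Inl i \<Rightarrow> 0 | Inr j \<Rightarrow> z $ k)"

lemma linear_ES: "linear (ES :: real^'q \<Rightarrow> real ^ ('p::finite + 'q::finite))"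
  by (auto simp: linear_iff vec_eq_iff ES_def split: sum.split)

lemma connected_U_S:
  assumes "2 \<le> CARD('q)"
  shows "connected (U_S :: (real ^ ('p::finite + 'q::finite)) set)"
proof -
  let ?A = "(ES :: real^'q \<Rightarrow> real ^ ('p + 'q)) ` (- {0})"
  have cA: "connected ?A"
    apply (rule connected_continuous_image)
     apply (rule linear_continuous_on)
    using linear_ES linear_conv_bounded_linear apply blast
    apply (rule connected_punctured_universe) using assms by simp
  have AU: "?A \<subseteq> U_S"
  proof
    fix y assume "y \<in> ?A"
    then obtain x :: "real^'q" where x: "x \<noteq> 0" "y = ES x" by auto
    have "Pp y = x \<bullet> x" by (simp add: x Pp_def ES_def inner_vec_def power2_eq_square)
    moreover have "Nn y = 0" by (simp add: x Nn_def ES_def)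
    ultimately show "y \<in> U_S" using x by (simp add: U_S_def qpq_NP)
  qed
  have "(1::real^'q) \<noteq> 0" by (simp add: vec_eq_iff)
  hence Ane: "?A \<noteq> {}" by blast 
  define F where "F = (\<lambda>z. closed_segment z (PS z) \<union> ?A) ` U_S"
  have seg: "closed_segment z (PS z) \<subseteq> U_S" if z: "z \<in> U_S" for z
  proof
    fix y assume "y \<in> closed_segment z (PS z)"
    then obtain u where u: "0 \<le> u" "u \<le> 1" "y = (1 - u) *\<^sub>R z + u *\<^sub>R PS z"
      by (auto simp: closed_segment_def)
    have "Pp y = Pp z" by (simp add: u Pp_def PS_def algebra_simps)
    moreover have "Nn y = (1-u)^2 * Nn z"
      by (simp add: u Nn_def PS_def sum_distrib_left power_mult_distrib)
    moreover have "(1-u)^2 \<le> 1" using u by (simp add: power_le_one)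
    moreover have "Nn z < Pp z" using z by (simp add: U_S_def qpq_NP)
    ultimately have "Nn y < Pp y" using Nn_ge0[of z] mult_left_le_one_le[of "Nn z" "(1-u)^2"]
      by simp
    thus "y \<in> U_S" by (simp add: U_S_def qpq_NP)
  qed
  have PSA: "PS z \<in> ?A" if z: "z \<in> U_S" for z
  proof -
    have "PS z = ES (\<chi> i. z $ Inr i)" by (simp add: PS_def ES_def vec_eq_iff split: sum.split)
    moreover have "(\<chi> i. z $ Inr i) \<noteq> (0::real^'q)"
    proof
      assume h: "(\<chi> i. z $ Inr i) = (0::real^'q)"
      have "Pp z = 0" using h by (simp add: Pp_def vec_eq_iff)
      thus False using z Nn_ge0[of z] by (simp add: U_S_def qpq_NP)
    qed
    ultimately show ?thesis by auto
  qed
  have "connected (\<Union>F)"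
  proof (rule connected_Union)
    fix s assume "s \<in> F"
    then obtain z where z: "z \<in> U_S" "s = closed_segment z (PS z) \<union> ?A" by (auto simp: F_def)
    show "connected s" unfolding z(2)
      by (rule connected_Un[OF connected_segment cA]) (use PSA[OF z(1)] in auto)
  next
    have "?A \<subseteq> \<Inter>F" by (auto simp: F_def)
    thus "\<Inter>F \<noteq> {}" using Ane by blast
  qed
  moreover have "\<Union>F = U_S"
  proof
    show "\<Union>F \<subseteq> U_S" using seg AU by (auto simp: F_def)
    show "U_S \<subseteq> \<Union>F" unfolding F_def by (auto intro: ends_in_segment)
  qed
  ultimately show ?thesis by metis
qed



lemma bpq_axis_Inl: "bpq d (axis (Inl i) 1) = - d $ Inl i"
  by (simp add: bpq_def axis_def if_distrib[where f="\<lambda>x. _ * x"] cong: if_cong)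
lemma bpq_axis_Inr: "bpq d (axis (Inr j) 1) = d $ Inr j"
  by (simp add: bpq_def axis_def if_distrib[where f="\<lambda>x. _ * x"] cong: if_cong)
lemma qpq_axis_Inl: "qpq (axis (Inl i) 1 :: real^('p::finite+'q::finite)) = -1"
  by (simp add: qpq_def bpq_axis_Inl)
lemma qpq_axis_Inr: "qpq (axis (Inr j) 1 :: real^('p::finite+'q::finite)) = 1"
  by (simp add: qpq_def bpq_axis_Inr)
lemma qpq_minus: "qpq (- x) = qpq x"
  by (simp add: qpq_def bpq_minus_left bpq_minus_right)
lemma qpq_diff: "qpq (x - y) = qpq x - 2 * bpq x y + qpq y"
  using qpq_add[of x "-y"] by (simp add: qpq_minus bpq_minus_right)

lemma PT_PS: "d = PT d + PS d"
  by (simp add: PT_def PS_def vec_eq_iff split: sum.split)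
lemma qpq_PS: "qpq (PS d) = Pp d"
  by (simp add: qpq_NP Pp_def Nn_def PS_def)
lemma qpq_PT: "qpq (PT d) = - Nn d"
  by (simp add: qpq_NP Pp_def Nn_def PT_def)
lemma bpq_PS: "bpq v (PS v) = Pp v"
  by (simp add: bpq_def Pp_def PS_def power2_eq_square)
lemma bpq_PT: "bpq v (PT v) = - Nn v"
  by (simp add: bpq_def Nn_def PT_def power2_eq_square)

lemma Nn0: "Nn d = 0 \<Longrightarrow> d $ Inl i = 0"
  unfolding Nn_def by (subst (asm) sum_nonneg_eq_0_iff) auto
lemma Pp0: "Pp d = 0 \<Longrightarrow> d $ Inr i = 0"
  unfolding Pp_def by (subst (asm) sum_nonneg_eq_0_iff) auto

lemma quad_pos:
  fixes A B :: real
  defines "t \<equiv> 1 + \<bar>A\<bar> + \<bar>B\<bar>"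
  shows "t^2 + A * t + B > 0"
proof -
  have t1: "t \<ge> 1" unfolding t_def by simp
  have "t^2 = t * (1 + \<bar>A\<bar> + \<bar>B\<bar>)" using t_def by (simp add: power2_eq_square)
  also have "\<dots> = t + t * \<bar>A\<bar> + t * \<bar>B\<bar>" by (simp add: distrib_left)
  finally have e: "t^2 = t + t * \<bar>A\<bar> + t * \<bar>B\<bar>" .
  have h2: "t * \<bar>B\<bar> \<ge> \<bar>B\<bar>" using t1 by (simp add: mult_le_cancel_right1)
  have "t * (- A) \<le> t * \<bar>A\<bar>" using t1 by (intro mult_left_mono) auto
  hence h1: "t * \<bar>A\<bar> + A * t \<ge> 0" by (simp add: algebra_simps)
  have h3: "\<bar>B\<bar> + B \<ge> 0" by simp
  show ?thesis using e h1 h2 h3 t1 by linarith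
qed

lemma SS_meet: "\<exists>x :: real^('p::finite+'q::finite). qpq (x - v0) > 0 \<and> qpq (x - v1) > 0"
proof -
  define w :: "real^('p+'q)" where "w = axis (Inr undefined) 1"
  define c where "c = v0 - v1"
  define t where "t = 1 + \<bar>2 * bpq w c\<bar> + \<bar>qpq c\<bar>"
  have t: "t^2 + (2 * bpq w c) * t + qpq c > 0" unfolding t_def by (rule quad_pos)
  have w: "qpq w = 1" by (simp add: w_def qpq_axis_Inr)
  have "qpq ((v0 + t *\<^sub>R w) - v0) = t^2" by (simp add: qpq_scale w)
  moreover have "t \<noteq> 0" unfolding t_def by simp
  moreover have "(v0 + t *\<^sub>R w) - v1 = t *\<^sub>R w + c" by (simp add: c_def)
  hence "qpq ((v0 + t *\<^sub>R w) - v1) = t^2 + (2 * bpq w c) * t + qpq c"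
    by (simp add: qpq_add qpq_scale w bpq_scale_left bpq_scale_right bpq_sym[of c w] algebra_simps)
  ultimately show ?thesis using t by (intro exI[of _ "v0 + t *\<^sub>R w"]) simp
qed

lemma TT_meet: "\<exists>x :: real^('p::finite+'q::finite). qpq (x - v0) < 0 \<and> qpq (x - v1) < 0"
proof -
  define w :: "real^('p+'q)" where "w = axis (Inl undefined) 1"
  define c where "c = v0 - v1"
  define t where "t = 1 + \<bar>- 2 * bpq w c\<bar> + \<bar>- qpq c\<bar>"
  have t: "t^2 + (- 2 * bpq w c) * t + - qpq c > 0" unfolding t_def by (rule quad_pos)
  have w: "qpq w = -1" by (simp add: w_def qpq_axis_Inl)
  have "qpq ((v0 + t *\<^sub>R w) - v0) = - (t^2)" by (simp add: qpq_scale w)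
  moreover have "t \<noteq> 0" unfolding t_def by simp
  moreover have "(v0 + t *\<^sub>R w) - v1 = t *\<^sub>R w + c" by (simp add: c_def)
  hence "qpq ((v0 + t *\<^sub>R w) - v1) = - (t^2) + (2 * bpq w c) * t + qpq c"
    by (simp add: qpq_add qpq_scale w bpq_scale_left bpq_scale_right bpq_sym[of c w] algebra_simps)
  ultimately show ?thesis using t by (intro exI[of _ "v0 + t *\<^sub>R w"]) simp
qed

lemma ST_meet:
  fixes v0 v1 :: "real^('p::finite+'q::finite)"
  assumes "v0 \<noteq> v1"
  shows "\<exists>x. qpq (x - v0) > 0 \<and> qpq (x - v1) < 0"
proof -
  define d where "d = v1 - v0"
  have dne: "d \<noteq> 0" using assms by (simp add: d_def)
  have key: "\<exists>y. qpq y > 0 \<and> qpq (y - d) < 0"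
  proof (cases "Nn d > 0")
    case True
    show ?thesis
    proof (cases "Pp d > 0")
      case True2: True
      have "PS d - d = - PT d" using PT_PS[of d] by (simp add: algebra_simps)
      hence "qpq (PS d - d) = - Nn d" by (simp add: qpq_minus qpq_PT)
      thus ?thesis using True True2 by (intro exI[of _ "PS d"]) (simp add: qpq_PS)
    next
      case False
      hence P0: "Pp d = 0" using Pp_ge0[of d] by simp
      define s where "s = min 1 (Nn d / 2)"
      have s: "0 < s" "s \<le> 1" "s \<le> Nn d / 2" using True by (auto simp: s_def)
      have "s^2 \<le> s" using s by (simp add: power2_eq_square mult_le_cancel_left1)
      hence s2: "s^2 < Nn d" using s by simp
      define y :: "real^('p+'q)" where "y = s *\<^sub>R axis (Inr undefined) 1"
      have qy: "qpq y = s^2" by (simp add: y_def qpq_scale qpq_axis_Inr)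
      have "bpq y d = 0" using Pp0[OF P0]
        by (simp add: y_def bpq_scale_left bpq_scale_right bpq_sym[of _ d] bpq_axis_Inr)
      moreover have "qpq d = - Nn d" using P0 by (simp add: qpq_NP)
      ultimately have "qpq (y - d) = s^2 - Nn d" by (simp add: qpq_diff qy)
      thus ?thesis using s s2 qy by (intro exI[of _ y]) simp
    qed
  next
    case False
    hence N0: "Nn d = 0" using Nn_ge0[of d] by simp
    have "Pp d > 0"
    proof (rule ccontr)
      assume "\<not> Pp d > 0" hence "Pp d = 0" using Pp_ge0[of d] by simp
      hence "d $ k = 0" for k using Pp0 Nn0[OF N0] by (cases k) auto
      hence "d = 0" by (simp add: vec_eq_iff)
      thus False using dne by simp
    qed
    define s where "s = min 1 (Pp d / 2)"
    have s: "0 < s" "s \<le> 1" "s \<le> Pp d / 2" using \<open>Pp d > 0\<close> by (auto simp: s_def)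
    have "s^2 \<le> s" using s by (simp add: power2_eq_square mult_le_cancel_left1)
    hence s2: "s^2 < Pp d" using s by simp
    define e :: "real^('p+'q)" where "e = s *\<^sub>R axis (Inl undefined) 1"
    have qe: "qpq e = - (s^2)" by (simp add: e_def qpq_scale qpq_axis_Inl)
    have "bpq d e = 0" using Nn0[OF N0]
      by (simp add: e_def bpq_scale_right bpq_axis_Inl)
    moreover have "qpq d = Pp d" using N0 by (simp add: qpq_NP)
    ultimately have "qpq (d + e) = Pp d - (s^2)" by (simp add: qpq_add qe)
    moreover have "qpq (d + e - d) = - (s^2)" by (simp add: qe)
    ultimately show ?thesis using s s2 by (intro exI[of _ "d + e"]) simp
  qed
  then obtain y where y: "qpq y > 0" "qpq (y - d) < 0" by blast
  have eq: "(v0 + y) - v1 = y - d" by (simp add: d_def algebra_simps)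
  have "qpq ((v0 + y) - v1) < 0" using y(2) by (simp only: eq)
  moreover have "qpq ((v0 + y) - v0) > 0" using y by simp
  ultimately show ?thesis by blast
qed

lemma SH_meet:
  fixes v v0 :: "real^('p::finite+'q::finite)"
  assumes "v \<in> lightcone - {0}"
  shows "\<exists>x. qpq (x - v0) > 0 \<and> bpq v x > \<alpha>"
proof -
  have P: "Pp v > 0" using null_pos[OF assms] by simp
  define t where "t = (\<bar>\<alpha>\<bar> + \<bar>bpq v v0\<bar> + 1) / Pp v"
  have t: "t > 0" using P by (simp add: t_def add_pos_nonneg)
  have tP: "t * Pp v = \<bar>\<alpha>\<bar> + \<bar>bpq v v0\<bar> + 1" using P by (simp add: t_def)
  have q: "qpq ((v0 + t *\<^sub>R PS v) - v0) = t^2 * Pp v" by (simp add: qpq_scale qpq_PS)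
  have b: "bpq v (v0 + t *\<^sub>R PS v) = bpq v v0 + t * Pp v"
    by (simp add: bpq_add_right bpq_scale_right bpq_PS)
  have ab: "\<alpha> \<le> \<bar>\<alpha>\<bar>" "- \<bar>bpq v v0\<bar> \<le> bpq v v0" by auto
  have "qpq ((v0 + t *\<^sub>R PS v) - v0) > 0" using q t P by simp
  moreover have "bpq v (v0 + t *\<^sub>R PS v) > \<alpha>" using b tP ab by linarith
  ultimately show ?thesis by blast
qed

lemma TH_meet:
  fixes v v0 :: "real^('p::finite+'q::finite)"
  assumes "v \<in> lightcone - {0}"
  shows "\<exists>x. qpq (x - v0) < 0 \<and> bpq v x > \<alpha>"
proof -
  have P: "Nn v > 0" using null_pos[OF assms] by simp
  define t where "t = (\<bar>\<alpha>\<bar> + \<bar>bpq v v0\<bar> + 1) / Nn v"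
  have t: "t > 0" using P by (simp add: t_def add_pos_nonneg)
  have tP: "t * Nn v = \<bar>\<alpha>\<bar> + \<bar>bpq v v0\<bar> + 1" using P by (simp add: t_def)
  have q: "qpq ((v0 - t *\<^sub>R PT v) - v0) = - (t^2 * Nn v)" by (simp add: qpq_scale qpq_PT qpq_minus)
  have b: "bpq v (v0 - t *\<^sub>R PT v) = bpq v v0 + t * Nn v"
    by (simp add: bpq_diff_right bpq_scale_right bpq_PT)
  have "t^2 * Nn v > 0" using t P by simp
  have ab: "\<alpha> \<le> \<bar>\<alpha>\<bar>" "- \<bar>bpq v v0\<bar> \<le> bpq v v0" by auto
  have "qpq ((v0 - t *\<^sub>R PT v) - v0) < 0" using q \<open>t^2 * Nn v > 0\<close> by simp
  moreover have "bpq v (v0 - t *\<^sub>R PT v) > \<alpha>" using b tP ab by linarith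
  ultimately show ?thesis by blast
qed



lemma Jv_Jv: "Jv (Jv u) = u"
  by (simp add: Jv_def vec_eq_iff split: sum.split)

lemma bpq_eq_inner: "bpq v w = Jv v \<bullet> w"
proof -
  have "bpq v w = bpq w (Jv (Jv v))" by (simp add: Jv_Jv bpq_sym)
  also have "\<dots> = w \<bullet> Jv v" by (rule bpq_Jv)
  finally show ?thesis by (simp add: inner_commute)
qed

lemma Hpq_halfspace: "Hpq v \<alpha> = {w. Jv v \<bullet> w > \<alpha>}"
  by (simp add: Hpq_def bpq_eq_inner)

lemma convex_Hpq: "convex (Hpq v \<alpha>)"
  unfolding Hpq_halfspace by (rule convex_halfspace_gt)

lemma open_Hpq: "open (Hpq v \<alpha>)"
  unfolding Hpq_halfspace by (rule open_halfspace_gt)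

lemma bpq_level:
  assumes "v \<noteq> 0" shows "\<exists>x. bpq v x = r"
proof -
  have "v \<bullet> v \<noteq> 0" using assms by simp
  hence "bpq v (Jv ((r / (v \<bullet> v)) *\<^sub>R v)) = r" by (simp add: bpq_Jv)
  thus ?thesis by blast
qed

lemma Hpq_scale: "c > 0 \<Longrightarrow> Hpq (c *\<^sub>R v) \<beta> = Hpq v (\<beta> / c)"
  by (auto simp: Hpq_def bpq_scale_left pos_divide_less_eq mult.commute)

lemma Hpq_inj:
  assumes "v \<noteq> 0" "Hpq v a = Hpq v b" shows "a = b"
proof (rule ccontr)
  assume ne: "a \<noteq> b"
  obtain x where x: "bpq v x = (a + b) / 2" using bpq_level[OF assms(1)] by blast
  have "(x \<in> Hpq v a) \<noteq> (x \<in> Hpq v b)" using ne x by (auto simp: Hpq_def)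
  thus False using assms(2) by simp
qed

lemma Hpq_opp_disj:
  assumes "v \<noteq> 0" "Hpq v a \<inter> Hpq (- v) b = {}" shows "- b \<le> a"
proof (rule ccontr)
  assume "\<not> - b \<le> a"
  obtain x where x: "bpq v x = (a - b) / 2" using bpq_level[OF assms(1)] by blast
  have "x \<in> Hpq v a \<inter> Hpq (- v) b" using x \<open>\<not> - b \<le> a\<close> by (auto simp: Hpq_def bpq_minus_left)
  thus False using assms(2) by simp
qed

lemma Hpq_disj_parallel:
  fixes v v' :: "real^('p::finite+'q::finite)"
  assumes "v \<noteq> 0" "v' \<noteq> 0" "Hpq v a \<inter> Hpq v' b = {}"
  shows "\<exists>c>0. v' = (- c) *\<^sub>R v"
proof (rule ccontr)
  assume nc: "\<not> (\<exists>c>0. v' = (- c) *\<^sub>R v)"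
  have nv: "norm v > 0" "norm v' > 0" using assms by auto
  define k where "k = v \<bullet> v' + norm v * norm v'"
  have "\<bar>v \<bullet> v'\<bar> \<le> norm v * norm v'" by (rule Cauchy_Schwarz_ineq2)
  hence k0: "k \<ge> 0" unfolding k_def by linarith
  have "k \<noteq> 0"
  proof
    assume "k = 0"
    hence "(- v) \<bullet> v' = norm (- v) * norm v'" by (simp add: k_def)
    hence "norm (- v) *\<^sub>R v' = norm v' *\<^sub>R (- v)" by (simp only: norm_cauchy_schwarz_eq)
    hence h: "norm v *\<^sub>R v' = (- norm v') *\<^sub>R v" by simp
    have "v' = (1 / norm v) *\<^sub>R (norm v *\<^sub>R v')" using nv by simp
    also have "\<dots> = (1 / norm v) *\<^sub>R ((- norm v') *\<^sub>R v)" by (simp only: h)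
    also have "\<dots> = (- (norm v' / norm v)) *\<^sub>R v" by simp
    finally have "v' = (- (norm v' / norm v)) *\<^sub>R v" .
    moreover have "norm v' / norm v > 0" using nv by simp
    ultimately show False using nc by blast
  qed
  hence k: "k > 0" using k0 by simp
  define u where "u = norm v' *\<^sub>R v + norm v *\<^sub>R v'"
  have a': "v \<bullet> u = norm v * k"
    by (simp add: u_def k_def inner_add_right algebra_simps dot_square_norm power2_eq_square)
  have b': "v' \<bullet> u = norm v' * k"
    by (simp add: u_def k_def inner_add_right algebra_simps dot_square_norm power2_eq_square inner_commute)
  define A where "A = norm v * k"
  define B where "B = norm v' * k"
  have A: "A > 0" "B > 0" using k nv by (simp_all add: A_def B_def)
  define t where "t = (\<bar>a\<bar> + 1) / A + (\<bar>b\<bar> + 1) / B"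
  have "t * A = (\<bar>a\<bar> + 1) + (\<bar>b\<bar> + 1) / B * A" using A by (simp add: t_def field_simps)
  moreover have "(\<bar>b\<bar> + 1) / B * A \<ge> 0" using A by simp
  ultimately have tA: "t * A > a" by linarith
  have "t * B = (\<bar>b\<bar> + 1) + (\<bar>a\<bar> + 1) / A * B" using A by (simp add: t_def field_simps)
  moreover have "(\<bar>a\<bar> + 1) / A * B \<ge> 0" using A by simp
  ultimately have tB: "t * B > b" by linarith
  have "bpq v (Jv (t *\<^sub>R u)) = t * A" by (simp add: bpq_Jv a' A_def)
  moreover have "bpq v' (Jv (t *\<^sub>R u)) = t * B" by (simp add: bpq_Jv b' B_def)
  ultimately have "Jv (t *\<^sub>R u) \<in> Hpq v a \<inter> Hpq v' b" using tA tB by (simp add: Hpq_def)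
  thus False using assms(3) by simp
qed



lemma rank_exists:
  fixes f :: "nat \<Rightarrow> real"
  assumes "finite S" "inj_on f S"
  shows "\<exists>r. bij_betw r {1..card S} S \<and> (\<forall>i j. 1 \<le> i \<longrightarrow> i < j \<longrightarrow> j \<le> card S \<longrightarrow> f (r j) < f (r i))"
  using assms
proof (induction "card S" arbitrary: S)
  case 0
  hence "S = {}" by simp
  thus ?case by (auto simp: bij_betw_def)
next
  case (Suc n)
  hence ne: "S \<noteq> {}" by auto
  have "Min (f ` S) \<in> f ` S" using ne Suc.prems by simp
  then obtain m where m: "m \<in> S" "f m = Min (f ` S)" by auto
  have mle: "f m \<le> f x" if "x \<in> S" for x using m(2) Suc.prems that by simp
  have cn: "n = card (S - {m})" using Suc.hyps(2) m by simp
  obtain r where r: "bij_betw r {1..n} (S - {m})"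
    "\<forall>i j. 1 \<le> i \<longrightarrow> i < j \<longrightarrow> j \<le> n \<longrightarrow> f (r j) < f (r i)"
    using Suc.hyps(1)[OF cn] Suc.prems by (metis cn finite_Diff inj_on_diff)
  define r' where "r' = r(Suc n := m)"
  have "bij_betw r' {1..n} (S - {m})"
    using r(1) by (rule bij_betw_cong[THEN iffD1, rotated]) (auto simp: r'_def)
  hence "bij_betw r' ({1..n} \<union> {Suc n}) ((S - {m}) \<union> {r' (Suc n)})"
    by (intro notIn_Un_bij_betw) (auto simp: r'_def)
  moreover have "{1..n} \<union> {Suc n} = {1..card S}" using Suc.hyps(2) by auto
  moreover have "(S - {m}) \<union> {r' (Suc n)} = S" using m by (auto simp: r'_def)
  ultimately have bij: "bij_betw r' {1..card S} S" by simp
  have "f (r' j) < f (r' i)" if ij: "1 \<le> i" "i < j" "j \<le> card S" for i j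
  proof (cases "j \<le> n")
    case True
    thus ?thesis using r(2) ij by (auto simp: r'_def)
  next
    case False
    hence j: "j = Suc n" using ij Suc.hyps(2) by simp
    have i: "i \<in> {1..n}" using ij j by simp
    hence ri: "r i \<in> S - {m}" using bij_betwE[OF r(1)] by blast
    have "f (r i) \<noteq> f m" using ri m(1) Suc.prems(2) by (auto dest: inj_onD)
    moreover have "f m \<le> f (r i)" using ri mle by simp
    ultimately show ?thesis using i j by (auto simp: r'_def)
  qed
  thus ?case using bij by blast
qed

lemma sort2:
  fixes f g :: "nat \<Rightarrow> real"
  assumes part: "SA \<union> SB = {1..l}" "SA \<inter> SB = {}" and ne: "SA \<noteq> {}" "SB \<noteq> {}"
    and inj: "inj_on f SA" "inj_on g SB" and le: "\<forall>i\<in>SA. \<forall>j\<in>SB. g j \<le> f i"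
  shows "\<exists>\<sigma> \<alpha> k0. \<sigma> permutes {1..l} \<and> 1 \<le> k0 \<and> k0 \<le> l - 1 \<and>
    (\<forall>i. 1 \<le> i \<and> i < l \<and> i \<noteq> k0 \<longrightarrow> \<alpha> i > \<alpha> (Suc i)) \<and> \<alpha> k0 \<ge> \<alpha> (Suc k0) \<and>
    (\<forall>i\<in>{1..k0}. \<sigma> i \<in> SA \<and> \<alpha> i = f (\<sigma> i)) \<and>
    (\<forall>i\<in>{k0+1..l}. \<sigma> i \<in> SB \<and> \<alpha> i = g (\<sigma> i))"
proof -
  have fin: "finite SA" "finite SB" using part by (metis finite_Un finite_atLeastAtMost)+
  obtain rA where rA: "bij_betw rA {1..card SA} SA"
    "\<forall>i j. 1 \<le> i \<longrightarrow> i < j \<longrightarrow> j \<le> card SA \<longrightarrow> f (rA j) < f (rA i)"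
    using rank_exists[OF fin(1) inj(1)] by blast
  obtain rB where rB: "bij_betw rB {1..card SB} SB"
    "\<forall>i j. 1 \<le> i \<longrightarrow> i < j \<longrightarrow> j \<le> card SB \<longrightarrow> g (rB j) < g (rB i)"
    using rank_exists[OF fin(2) inj(2)] by blast
  define k0 where "k0 = card SA"
  define kB where "kB = card SB"
  have l: "l = k0 + kB" unfolding k0_def kB_def
    using card_Un_disjoint[OF fin part(2)] part(1) by simp
  have k1: "k0 \<ge> 1" "kB \<ge> 1" using ne fin by (auto simp: k0_def kB_def Suc_le_eq card_gt_0_iff)
  define \<sigma> where "\<sigma> m = (if m \<in> {1..k0} then rA m else if m \<in> {k0+1..l} then rB (m - k0) else m)" for m
  define \<alpha> where "\<alpha> m = (if m \<le> k0 then f (\<sigma> m) else g (\<sigma> m))" for m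
  have b1: "bij_betw \<sigma> {1..k0} SA"
    using rA(1) unfolding k0_def by (rule bij_betw_cong[THEN iffD1, rotated]) (auto simp: \<sigma>_def k0_def)
  have sh: "bij_betw (\<lambda>m. m - k0) {k0+1..l} {1..kB}"
    by (rule bij_betwI[where g="\<lambda>m. m + k0"]) (auto simp: l)
  have "bij_betw (rB \<circ> (\<lambda>m. m - k0)) {k0+1..l} SB"
    using bij_betw_trans[OF sh] rB(1) unfolding kB_def by blast
  hence b2: "bij_betw \<sigma> {k0+1..l} SB"
    by (rule bij_betw_cong[THEN iffD1, rotated]) (auto simp: \<sigma>_def)
  have "bij_betw \<sigma> ({1..k0} \<union> {k0+1..l}) (SA \<union> SB)"
    by (rule bij_betw_combine[OF b1 b2 part(2)])
  moreover have "{1..k0} \<union> {k0+1..l} = {1..l}" using l by auto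
  ultimately have "bij_betw \<sigma> {1..l} {1..l}" using part(1) by simp
  hence perm: "\<sigma> permutes {1..l}"
    by (rule bij_imp_permutes) (auto simp: \<sigma>_def l)
  have inA: "\<sigma> i \<in> SA \<and> \<alpha> i = f (\<sigma> i)" if "i \<in> {1..k0}" for i
    using that b1 by (auto simp: \<alpha>_def dest: bij_betwE)
  have inB: "\<sigma> i \<in> SB \<and> \<alpha> i = g (\<sigma> i)" if "i \<in> {k0+1..l}" for i
    using that b2 by (auto simp: \<alpha>_def dest: bij_betwE)
  have dec: "\<alpha> i > \<alpha> (Suc i)" if i: "1 \<le> i" "i < l" "i \<noteq> k0" for i
  proof (cases "Suc i \<le> k0")
    case True
    thus ?thesis using rA(2) i by (auto simp: \<alpha>_def \<sigma>_def k0_def)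
  next
    case False
    hence i2: "k0 + 1 \<le> i" using i by simp
    have "g (rB (Suc i - k0)) < g (rB (i - k0))"
      using rB(2) i2 i l unfolding kB_def by auto
    moreover have "\<sigma> i = rB (i - k0)" "\<sigma> (Suc i) = rB (Suc i - k0)" using i2 i by (auto simp: \<sigma>_def)
    ultimately show ?thesis using i2 by (simp add: \<alpha>_def)
  qed
  have "\<alpha> k0 \<ge> \<alpha> (Suc k0)"
  proof -
    have "k0 \<in> {1..k0}" "Suc k0 \<in> {k0+1..l}" using k1 l by auto
    thus ?thesis using inA inB le by auto
  qed
  moreover have "k0 \<le> l - 1" using l k1 by simp
  ultimately show ?thesis using perm k1 dec inA inB by blast
qed



lemma connected_trans: "connected S \<Longrightarrow> connected ((\<lambda>u. v0 + u) ` (S :: (real^'n) set))"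
  by (rule connected_continuous_image) (auto intro!: continuous_intros)

lemma conn_it:
  assumes "2 \<le> CARD('p)" "2 \<le> CARD('q)"
    and "intersection_type (W :: (real ^ ('p::finite + 'q::finite)) set)"
  shows "connected W"
  using assms(3) unfolding intersection_type_def
  using connected_trans[OF connected_U_S[OF assms(2)]] connected_trans[OF connected_U_T[OF assms(1)]]
    convex_connected[OF convex_Hpq] by blast

lemma mem_S: "x \<in> (\<lambda>u. v0 + u) ` U_S \<longleftrightarrow> qpq (x - v0) > 0"
  by (simp add: trans_image U_S_def)
lemma mem_T: "x \<in> (\<lambda>u. v0 + u) ` U_T \<longleftrightarrow> qpq (x - v0) < 0"
  by (simp add: trans_image U_T_def)

lemma cone_S_opp:
  fixes Y :: "(real ^ ('p::finite + 'q::finite)) set"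
  assumes "intersection_type Y" "(\<lambda>u. v0 + u) ` U_S \<inter> Y = {}"
  shows "Y = (\<lambda>u. v0 + u) ` U_T"
proof -
  have "False" if "Y = (\<lambda>u. v1 + u) ` U_S" for v1
  proof -
    obtain x where "qpq (x - v0) > 0" "qpq (x - v1) > 0" using SS_meet[of v0 v1] by blast
    hence "x \<in> (\<lambda>u. v0 + u) ` U_S \<inter> Y" using that by (simp add: mem_S)
    thus False using assms(2) by simp
  qed
  moreover have "v1 = v0" if "Y = (\<lambda>u. v1 + u) ` U_T" for v1
  proof (rule ccontr)
    assume "v1 \<noteq> v0"
    then obtain x where "qpq (x - v0) > 0" "qpq (x - v1) < 0" using ST_meet[of v0 v1] by auto
    hence "x \<in> (\<lambda>u. v0 + u) ` U_S \<inter> Y" using that by (simp add: mem_S mem_T)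
    thus False using assms(2) by simp
  qed
  moreover have "False" if h: "v \<in> lightcone - {0}" "Y = Hpq v a" for v a
  proof -
    obtain x where "qpq (x - v0) > 0" "bpq v x > a" using SH_meet[OF h(1)] by blast
    hence "x \<in> (\<lambda>u. v0 + u) ` U_S \<inter> Y" using h by (simp add: mem_S Hpq_def)
    thus False using assms(2) by simp
  qed
  ultimately show ?thesis using assms(1) unfolding intersection_type_def by blast
qed

lemma cone_T_opp:
  fixes Y :: "(real ^ ('p::finite + 'q::finite)) set"
  assumes "intersection_type Y" "(\<lambda>u. v0 + u) ` U_T \<inter> Y = {}"
  shows "Y = (\<lambda>u. v0 + u) ` U_S"
proof -
  have "False" if "Y = (\<lambda>u. v1 + u) ` U_T" for v1
  proof -
    obtain x where "qpq (x - v0) < 0" "qpq (x - v1) < 0" using TT_meet[of v0 v1] by blast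
    hence "x \<in> (\<lambda>u. v0 + u) ` U_T \<inter> Y" using that by (simp add: mem_T)
    thus False using assms(2) by simp
  qed
  moreover have "v1 = v0" if "Y = (\<lambda>u. v1 + u) ` U_S" for v1
  proof (rule ccontr)
    assume "v1 \<noteq> v0"
    then obtain x where "qpq (x - v1) > 0" "qpq (x - v0) < 0" using ST_meet[of v1 v0] by auto
    hence "x \<in> (\<lambda>u. v0 + u) ` U_T \<inter> Y" using that by (simp add: mem_S mem_T)
    thus False using assms(2) by simp
  qed
  moreover have "False" if h: "v \<in> lightcone - {0}" "Y = Hpq v a" for v a
  proof -
    obtain x where "qpq (x - v0) < 0" "bpq v x > a" using TH_meet[OF h(1)] by blast
    hence "x \<in> (\<lambda>u. v0 + u) ` U_T \<inter> Y" using h by (simp add: mem_T Hpq_def)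
    thus False using assms(2) by simp
  qed
  ultimately show ?thesis using assms(1) unfolding intersection_type_def by blast
qed

lemma cone_case_gen:
  assumes inj: "inj_on W {1..l}" and it: "\<forall>i\<in>{1..l}. intersection_type (W i)"
    and part: "SA \<union> SB = {1..l}" "SA \<inter> SB = {}" and neB: "SB \<noteq> {}"
    and disj: "\<forall>i\<in>SA. \<forall>j\<in>SB. W i \<inter> W j = {}"
    and i: "i \<in> SA" "W i = X"
    and op1: "\<And>Y. intersection_type Y \<Longrightarrow> X \<inter> Y = {} \<Longrightarrow> Y = X'"
    and op2: "\<And>Y. intersection_type Y \<Longrightarrow> X' \<inter> Y = {} \<Longrightarrow> Y = X"
  shows "\<exists>j. SA = {i} \<and> SB = {j} \<and> W j = X'"
proof -
  obtain j where j: "j \<in> SB" using neB by blast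
  have WB: "W k = X'" if "k \<in> SB" for k
    using op1[of "W k"] it disj i that part(1) by blast
  have SB: "SB = {j}"
  proof -
    have "k = j" if "k \<in> SB" for k
      using WB[OF that] WB[OF j] inj that j part(1) by (auto dest: inj_onD)
    thus ?thesis using j by blast
  qed
  have "k = i" if "k \<in> SA" for k
  proof -
    have "W k = X" using op2[of "W k"] it disj that j WB[OF j] part(1) by (metis Int_commute UnCI)
    thus ?thesis using i inj that part(1) by (auto dest: inj_onD)
  qed
  hence "SA = {i}" using i by blast
  thus ?thesis using SB WB j by blast
qed

lemma two_perm:
  assumes "{a, b} = {1..(2::nat)}" "a \<noteq> b"
  shows "\<exists>\<sigma>. \<sigma> permutes {1..2} \<and> \<sigma> 1 = a \<and> \<sigma> 2 = b"
proof -
  have e: "{1..(2::nat)} = {1,2}" by auto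
  have ab: "a \<in> {1,2}" "b \<in> {1,2}" using assms(1) unfolding e by blast+
  show ?thesis
  proof (cases "a = 1")
    case True
    hence "b = 2" using ab assms(2) by auto
    thus ?thesis using True by (intro exI[of _ id]) auto
  next
    case False
    hence "a = 2" "b = 1" using ab assms(2) by auto
    thus ?thesis by (intro exI[of _ "Transposition.transpose 1 2"]) (auto intro!: permutes_swap_id)
  qed
qed



lemma dec_chain:
  fixes f :: "nat \<Rightarrow> real"
  assumes "\<forall>i. a \<le> i \<and> i < b \<longrightarrow> f (Suc i) < f i" "a \<le> m" "m \<le> b"
  shows "f b \<le> f m"
  using assms
proof (induction b)
  case 0 thus ?case by simp
next
  case (Suc b)
  show ?case
  proof (cases "m = Suc b")
    case True thus ?thesis by simp
  next
    case False
    hence mb: "m \<le> b" using Suc.prems by simp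
    have "f b \<le> f m" using Suc.IH Suc.prems mb by simp
    moreover have "f (Suc b) < f b" using Suc.prems mb by simp
    ultimately show ?thesis by simp
  qed
qed

lemma disc1:
  fixes W :: "nat \<Rightarrow> (real ^ ('p::finite + 'q::finite)) set"
  assumes ne: "\<forall>i\<in>{1..l}. W i \<noteq> {}"
   and v: "v \<in> lightcone - {0}" and \<sigma>: "\<sigma> permutes {1..l}" and k: "1 \<le> k0" "k0 \<le> l - 1"
   and dec: "\<forall>i. 1 \<le> i \<and> i < l \<and> i \<noteq> k0 \<longrightarrow> \<alpha> i > \<alpha> (Suc i)" and mid: "\<alpha> k0 \<ge> \<alpha> (Suc k0)"
   and h1: "\<forall>i\<in>{1..k0}. W (\<sigma> i) = Hpq v (\<alpha> i)"
   and h2: "\<forall>i\<in>{k0+1..l}. W (\<sigma> i) = Hpq (- v) (- \<alpha> i)"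
  shows "\<not> connected (\<Union>i\<in>{1..l}. W i)"
proof -
  define U where "U = (\<Union>i\<in>{1..l}. W i)"
  define e1 where "e1 = Hpq v (\<alpha> k0)"
  define e2 where "e2 = Hpq (- v) (- \<alpha> (Suc k0))"
  have s1: "W (\<sigma> m) \<subseteq> e1" if m: "m \<in> {1..k0}" for m
  proof -
    have "\<alpha> k0 \<le> \<alpha> m"
      by (rule dec_chain[of 1 k0 \<alpha> m]) (use dec k m in auto)
    thus ?thesis using h1 m by (auto simp: e1_def Hpq_def)
  qed
  have s2: "W (\<sigma> m) \<subseteq> e2" if m: "m \<in> {k0+1..l}" for m
  proof -
    have "\<alpha> m \<le> \<alpha> (Suc k0)"
      by (rule dec_chain[of "Suc k0" m \<alpha> "Suc k0"]) (use dec k m in auto)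
    thus ?thesis using h2 m by (auto simp: e2_def Hpq_def bpq_minus_left)
  qed
  have cover: "U \<subseteq> e1 \<union> e2"
  proof
    fix x assume "x \<in> U"
    then obtain i where i: "i \<in> {1..l}" "x \<in> W i" by (auto simp: U_def)
    have "i \<in> \<sigma> ` {1..l}" using permutes_image[OF \<sigma>] i by simp
    then obtain m where m: "m \<in> {1..l}" "i = \<sigma> m" by auto
    show "x \<in> e1 \<union> e2"
    proof (cases "m \<le> k0")
      case True thus ?thesis using s1[of m] m i by auto
    next
      case False thus ?thesis using s2[of m] m i by auto
    qed
  qed
  have dis: "e1 \<inter> e2 = {}" using mid by (auto simp: e1_def e2_def Hpq_def bpq_minus_left)
  have "k0 \<in> {1..l}" using k by auto
  hence "\<sigma> k0 \<in> {1..l}" using permutes_in_image[OF \<sigma>] by simp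
  hence n1: "W (\<sigma> k0) \<noteq> {}" "W (\<sigma> k0) \<subseteq> U" using ne by (auto simp: U_def)
  have "W (\<sigma> k0) = e1" using h1 k by (auto simp: e1_def)
  hence ne1: "e1 \<inter> U \<noteq> {}" using n1 by blast
  have sk: "Suc k0 \<in> {k0+1..l}" using k by auto
  hence "\<sigma> (Suc k0) \<in> {1..l}" using permutes_in_image[OF \<sigma>] by simp
  hence n2: "W (\<sigma> (Suc k0)) \<noteq> {}" "W (\<sigma> (Suc k0)) \<subseteq> U" using ne by (auto simp: U_def)
  have "W (\<sigma> (Suc k0)) = e2" using h2 sk by (auto simp: e2_def)
  hence ne2: "e2 \<inter> U \<noteq> {}" using n2 by blast
  have "open e1" "open e2" by (simp_all add: e1_def e2_def open_Hpq)
  hence "\<not> connected U" unfolding connected_def using cover dis ne1 ne2 by blast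
  thus ?thesis by (simp add: U_def)
qed

lemma disc2:
  fixes W :: "nat \<Rightarrow> (real ^ ('p::finite + 'q::finite)) set"
  assumes ne: "\<forall>i\<in>{1..l}. W i \<noteq> {} \<and> open (W i)" and l: "l = 2" and \<sigma>: "\<sigma> permutes {1..l}"
    and h: "W (\<sigma> 1) = (\<lambda>u. v + u) ` U_S" "W (\<sigma> 2) = (\<lambda>u. v + u) ` U_T"
  shows "\<not> connected (\<Union>i\<in>{1..l}. W i)"
proof -
  define U where "U = (\<Union>i\<in>{1..l}. W i)"
  have in1: "\<sigma> 1 \<in> {1..l}" "\<sigma> 2 \<in> {1..l}" using permutes_in_image[OF \<sigma>] l by auto
  have cover: "U \<subseteq> W (\<sigma> 1) \<union> W (\<sigma> 2)"
  proof
    fix x assume "x \<in> U"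
    then obtain i where i: "i \<in> {1..l}" "x \<in> W i" by (auto simp: U_def)
    have "i \<in> \<sigma> ` {1..l}" using permutes_image[OF \<sigma>] i by simp
    then obtain m where m: "m \<in> {1..l}" "i = \<sigma> m" by auto
    have "m = 1 \<or> m = 2" using m l by auto
    thus "x \<in> W (\<sigma> 1) \<union> W (\<sigma> 2)" using i m by auto
  qed
  have dis: "W (\<sigma> 1) \<inter> W (\<sigma> 2) = {}" unfolding h by (auto simp: U_S_def U_T_def)
  have sub: "W (\<sigma> 1) \<subseteq> U" "W (\<sigma> 2) \<subseteq> U" using in1 unfolding U_def by blast+
  have "W (\<sigma> 1) \<noteq> {}" "W (\<sigma> 2) \<noteq> {}" using in1 ne by auto
  hence "W (\<sigma> 1) \<inter> U \<noteq> {}" "W (\<sigma> 2) \<inter> U \<noteq> {}" using sub by blast+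
  moreover have "open (W (\<sigma> 1))" "open (W (\<sigma> 2))" using in1 ne by auto
  ultimately have "\<not> connected U" unfolding connected_def using cover dis by blast
  thus ?thesis by (simp add: U_def)
qed



lemma main_split:
  fixes W :: "nat \<Rightarrow> (real ^ ('p::finite + 'q::finite)) set"
  assumes inj: "inj_on W {1..l}" and it0: "\<forall>i\<in>{1..l}. W i \<noteq> {} \<and> open (W i) \<and> intersection_type (W i)"
    and part: "SA \<union> SB = {1..l}" "SA \<inter> SB = {}" and ne: "SA \<noteq> {}" "SB \<noteq> {}"
    and disj: "\<forall>i\<in>SA. \<forall>j\<in>SB. W i \<inter> W j = {}"
  shows "((\<exists>v \<alpha> k0 \<sigma>. v \<in> lightcone - {0} \<and> \<sigma> permutes {1..l} \<and> 1 \<le> k0 \<and> k0 \<le> l - 1 \<and>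
        (\<forall>i. 1 \<le> i \<and> i < l \<and> i \<noteq> k0 \<longrightarrow> \<alpha> i > \<alpha> (Suc i)) \<and> \<alpha> k0 \<ge> \<alpha> (Suc k0) \<and>
        (\<forall>i\<in>{1..k0}. W (\<sigma> i) = Hpq v (\<alpha> i)) \<and>
        (\<forall>i\<in>{k0+1..l}. W (\<sigma> i) = Hpq (- v) (- \<alpha> i)))
     \<or>
     (l = 2 \<and> (\<exists>v \<sigma>. \<sigma> permutes {1..l} \<and>
        W (\<sigma> 1) = (\<lambda>u. v + u) ` U_S \<and> W (\<sigma> 2) = (\<lambda>u. v + u) ` U_T)))"
proof -
  have it: "\<forall>i\<in>{1..l}. intersection_type (W i)" using it0 by blast
  have disj': "\<forall>i\<in>SB. \<forall>j\<in>SA. W i \<inter> W j = {}" using disj by blast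
  have part': "SB \<union> SA = {1..l}" "SB \<inter> SA = {}" using part by blast+
  show ?thesis
  proof (cases "\<exists>i\<in>{1..l}. \<exists>v0. W i = (\<lambda>u. v0 + u) ` U_S \<or> W i = (\<lambda>u. v0 + u) ` U_T")
    case True
    then obtain i v0 where i: "i \<in> {1..l}"
      and c: "W i = (\<lambda>u. v0 + u) ` U_S \<or> W i = (\<lambda>u. v0 + u) ` U_T" by blast
    have "\<exists>a b. {a, b} = {1..l} \<and> a \<noteq> b \<and> W a = (\<lambda>u. v0 + u) ` U_S \<and> W b = (\<lambda>u. v0 + u) ` U_T"
    proof -
      consider (A) "i \<in> SA" | (B) "i \<in> SB" using i part by blast
      then show ?thesis
      proof cases
        case A
        from c show ?thesis
        proof
          assume h: "W i = (\<lambda>u. v0 + u) ` U_S"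
          obtain j where j: "SA = {i}" "SB = {j}" "W j = (\<lambda>u. v0 + u) ` U_T"
            using cone_case_gen[OF inj it part ne(2) disj A h cone_S_opp cone_T_opp] by blast
          have "{i, j} = {1..l}" "i \<noteq> j" using j part by auto
          thus ?thesis using h j by blast
        next
          assume h: "W i = (\<lambda>u. v0 + u) ` U_T"
          obtain j where j: "SA = {i}" "SB = {j}" "W j = (\<lambda>u. v0 + u) ` U_S"
            using cone_case_gen[OF inj it part ne(2) disj A h cone_T_opp cone_S_opp] by blast
          have "{j, i} = {1..l}" "j \<noteq> i" using j part by auto
          thus ?thesis using h j by blast
        qed
      next
        case B
        from c show ?thesis
        proof
          assume h: "W i = (\<lambda>u. v0 + u) ` U_S"
          obtain j where j: "SB = {i}" "SA = {j}" "W j = (\<lambda>u. v0 + u) ` U_T"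
            using cone_case_gen[OF inj it part' ne(1) disj' B h cone_S_opp cone_T_opp] by blast
          have "{i, j} = {1..l}" "i \<noteq> j" using j part by auto
          thus ?thesis using h j by blast
        next
          assume h: "W i = (\<lambda>u. v0 + u) ` U_T"
          obtain j where j: "SB = {i}" "SA = {j}" "W j = (\<lambda>u. v0 + u) ` U_S"
            using cone_case_gen[OF inj it part' ne(1) disj' B h cone_T_opp cone_S_opp] by blast
          have "{j, i} = {1..l}" "j \<noteq> i" using j part by auto
          thus ?thesis using h j by blast
        qed
      qed
    qed
    then obtain a b where ab: "{a, b} = {1..l}" "a \<noteq> b"
      "W a = (\<lambda>u. v0 + u) ` U_S" "W b = (\<lambda>u. v0 + u) ` U_T" by blast
    have "card {a, b} = 2" using ab(2) by simp
    hence l2: "l = 2" using ab(1) by simp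
    obtain \<sigma> where "\<sigma> permutes {1..2}" "\<sigma> 1 = a" "\<sigma> 2 = b"
      using two_perm[of a b] ab l2 by blast
    thus ?thesis using ab l2 by blast
  next
    case False
    have hs: "\<forall>k\<in>{1..l}. \<exists>v. \<exists>a. v \<in> lightcone - {0} \<and> W k = Hpq v a"
      using it False unfolding intersection_type_def by blast
    obtain vv where vv: "\<forall>k\<in>{1..l}. \<exists>a. vv k \<in> lightcone - {0} \<and> W k = Hpq (vv k) a"
      using bchoice[OF hs] by blast
    obtain aa where aa: "\<forall>k\<in>{1..l}. vv k \<in> lightcone - {0} \<and> W k = Hpq (vv k) (aa k)"
      using bchoice[OF vv] by blast
    have nz: "vv k \<noteq> 0" if "k \<in> {1..l}" for k using aa that by blast
    obtain i0 where i0: "i0 \<in> SA" using ne by blast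
    obtain j0 where j0: "j0 \<in> SB" using ne by blast
    have I: "i \<in> {1..l}" if "i \<in> SA \<or> i \<in> SB" for i using that part by blast
    define v where "v = vv i0"
    have v: "v \<in> lightcone - {0}" using aa I i0 by (simp add: v_def)
    have vne: "v \<noteq> 0" using v by simp
    have par: "\<exists>c>0. vv j = (- c) *\<^sub>R vv i" if "i \<in> SA" "j \<in> SB" for i j
    proof -
      have "Hpq (vv i) (aa i) \<inter> Hpq (vv j) (aa j) = {}"
        using disj that aa I by metis
      thus ?thesis using Hpq_disj_parallel nz I that by blast
    qed
    have Bf: "\<exists>b. W j = Hpq (- v) b" if j: "j \<in> SB" for j
    proof -
      obtain c where c: "c > 0" "vv j = (- c) *\<^sub>R v" using par[OF i0 j] v_def by blast
      have "W j = Hpq (c *\<^sub>R (- v)) (aa j)" using aa I j c by simp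
      also have "\<dots> = Hpq (- v) (aa j / c)" by (rule Hpq_scale[OF c(1)])
      finally show ?thesis by blast
    qed
    obtain c0 where c0: "c0 > 0" "vv j0 = (- c0) *\<^sub>R v" using par[OF i0 j0] v_def by blast
    have Af: "\<exists>a. W k = Hpq v a" if k: "k \<in> SA" for k
    proof -
      obtain c where c: "c > 0" "vv j0 = (- c) *\<^sub>R vv k" using par[OF k j0] by blast
      have "(- c) *\<^sub>R vv k = (- c0) *\<^sub>R v" using c c0 by simp
      hence "(1 / c) *\<^sub>R ((- c) *\<^sub>R vv k) = (1 / c) *\<^sub>R ((- c0) *\<^sub>R v)" by simp
      hence vk: "vv k = (c0 / c) *\<^sub>R v" using c by simp
      have "W k = Hpq ((c0 / c) *\<^sub>R v) (aa k)" using aa I k vk by simp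
      also have "\<dots> = Hpq v (aa k / (c0 / c))" using c c0 by (intro Hpq_scale) simp
      finally show ?thesis by blast
    qed
    have "\<forall>k\<in>SA. \<exists>a. W k = Hpq v a" using Af by blast
    from bchoice[OF this] obtain af where af: "\<forall>k\<in>SA. W k = Hpq v (af k)" by blast
    have "\<forall>j\<in>SB. \<exists>b. W j = Hpq (- v) b" using Bf by blast
    from bchoice[OF this] obtain bf where bf: "\<forall>j\<in>SB. W j = Hpq (- v) (bf j)" by blast
    define gf where "gf j = - bf j" for j
    have injA: "inj_on af SA"
    proof (rule inj_onI)
      fix x y assume "x \<in> SA" "y \<in> SA" "af x = af y"
      hence "W x = W y" using af by simp
      thus "x = y" using inj I \<open>x \<in> SA\<close> \<open>y \<in> SA\<close> by (meson inj_onD)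
    qed
    have injB: "inj_on gf SB"
    proof (rule inj_onI)
      fix x y assume "x \<in> SB" "y \<in> SB" "gf x = gf y"
      hence "W x = W y" using bf by (simp add: gf_def)
      thus "x = y" using inj I \<open>x \<in> SB\<close> \<open>y \<in> SB\<close> by (meson inj_onD)
    qed
    have le: "\<forall>i\<in>SA. \<forall>j\<in>SB. gf j \<le> af i"
    proof (intro ballI)
      fix i j assume ij: "i \<in> SA" "j \<in> SB"
      have "Hpq v (af i) \<inter> Hpq (- v) (bf j) = {}" using disj ij af bf by metis
      thus "gf j \<le> af i" using Hpq_opp_disj[OF vne] by (simp add: gf_def)
    qed
    obtain \<sigma> \<alpha> k0 where s: "\<sigma> permutes {1..l}" "1 \<le> k0" "k0 \<le> l - 1"
      "\<forall>i. 1 \<le> i \<and> i < l \<and> i \<noteq> k0 \<longrightarrow> \<alpha> i > \<alpha> (Suc i)" "\<alpha> k0 \<ge> \<alpha> (Suc k0)"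
      "\<forall>i\<in>{1..k0}. \<sigma> i \<in> SA \<and> \<alpha> i = af (\<sigma> i)"
      "\<forall>i\<in>{k0+1..l}. \<sigma> i \<in> SB \<and> \<alpha> i = gf (\<sigma> i)"
      using sort2[OF part ne injA injB le] by blast
    have "\<forall>i\<in>{1..k0}. W (\<sigma> i) = Hpq v (\<alpha> i)" using s(6) af by simp
    moreover have "\<forall>i\<in>{k0+1..l}. W (\<sigma> i) = Hpq (- v) (- \<alpha> i)" using s(7) bf by (simp add: gf_def)
    ultimately show ?thesis using v s by blast
  qed
qed

theorem lemma5p10:
  fixes W :: "nat \<Rightarrow> (real ^ ('p::finite + 'q::finite)) set" and l :: nat
  assumes "2 \<le> CARD('p)" and "CARD('p) \<le> CARD('q)"
    and "inj_on W {1..l}"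
    and "\<forall>i\<in>{1..l}. W i \<noteq> {} \<and> open (W i) \<and> intersection_type (W i)"
  shows "\<not> connected (\<Union>i\<in>{1..l}. W i) \<longleftrightarrow>
    ((\<exists>v \<alpha> k0 \<sigma>. v \<in> lightcone - {0} \<and> \<sigma> permutes {1..l} \<and> 1 \<le> k0 \<and> k0 \<le> l - 1 \<and>
        (\<forall>i. 1 \<le> i \<and> i < l \<and> i \<noteq> k0 \<longrightarrow> \<alpha> i > \<alpha> (Suc i)) \<and> \<alpha> k0 \<ge> \<alpha> (Suc k0) \<and>
        (\<forall>i\<in>{1..k0}. W (\<sigma> i) = Hpq v (\<alpha> i)) \<and>
        (\<forall>i\<in>{k0+1..l}. W (\<sigma> i) = Hpq (- v) (- \<alpha> i)))
     \<or>
     (l = 2 \<and> (\<exists>v \<sigma>. \<sigma> permutes {1..l} \<and>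
        W (\<sigma> 1) = (\<lambda>u. v + u) ` U_S \<and> W (\<sigma> 2) = (\<lambda>u. v + u) ` U_T)))"
proof
  assume nc: "\<not> connected (\<Union>i\<in>{1..l}. W i)"
  define U where "U = (\<Union>i\<in>{1..l}. W i)"
  obtain A B where AB: "open A" "open B" "U \<subseteq> A \<union> B" "A \<inter> B \<inter> U = {}" "A \<inter> U \<noteq> {}" "B \<inter> U \<noteq> {}"
    using nc unfolding connected_def U_def by blast
  have q2: "2 \<le> CARD('q)" using assms(1,2) by simp
  have conn: "connected (W i)" if "i \<in> {1..l}" for i
    using conn_it[OF assms(1) q2] assms(4) that by blast
  define SA where "SA = {i\<in>{1..l}. W i \<subseteq> A}"
  define SB where "SB = {i\<in>{1..l}. W i \<subseteq> B}"
  have WU: "W i \<subseteq> U" if "i \<in> {1..l}" for i using that by (auto simp: U_def)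
  have each: "W i \<subseteq> A \<or> W i \<subseteq> B" if i: "i \<in> {1..l}" for i
  proof -
    have "A \<inter> B \<inter> W i = {}" using AB(4) WU[OF i] by blast
    moreover have "W i \<subseteq> A \<union> B" using AB(3) WU[OF i] by blast
    ultimately have "A \<inter> W i = {} \<or> B \<inter> W i = {}" using connectedD[OF conn[OF i] AB(1,2)] by blast
    thus ?thesis using \<open>W i \<subseteq> A \<union> B\<close> by blast
  qed
  have part1: "SA \<union> SB = {1..l}" unfolding SA_def SB_def using each by blast
  have part2: "SA \<inter> SB = {}"
  proof (rule ccontr)
    assume "SA \<inter> SB \<noteq> {}"
    then obtain i where i: "i \<in> {1..l}" "W i \<subseteq> A" "W i \<subseteq> B" by (auto simp: SA_def SB_def)
    hence "W i \<subseteq> A \<inter> B \<inter> U" using WU by blast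
    thus False using AB(4) assms(4) i by blast
  qed
  have neA: "SA \<noteq> {}"
  proof -
    obtain x where x: "x \<in> A" "x \<in> U" using AB(5) by blast
    then obtain i where i: "i \<in> {1..l}" "x \<in> W i" by (auto simp: U_def)
    have "\<not> W i \<subseteq> B" using x i AB(4) by blast
    hence "i \<in> SA" using each[OF i(1)] i by (auto simp: SA_def)
    thus ?thesis by blast
  qed
  have neB: "SB \<noteq> {}"
  proof -
    obtain x where x: "x \<in> B" "x \<in> U" using AB(6) by blast
    then obtain i where i: "i \<in> {1..l}" "x \<in> W i" by (auto simp: U_def)
    have "\<not> W i \<subseteq> A" using x i AB(4) by blast
    hence "i \<in> SB" using each[OF i(1)] i by (auto simp: SB_def)
    thus ?thesis by blast
  qed
  have disj: "\<forall>i\<in>SA. \<forall>j\<in>SB. W i \<inter> W j = {}"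
  proof (intro ballI)
    fix i j assume "i \<in> SA" "j \<in> SB"
    hence "W i \<inter> W j \<subseteq> A \<inter> B \<inter> U" using WU by (auto simp: SA_def SB_def)
    thus "W i \<inter> W j = {}" using AB(4) by blast
  qed
  show "(\<exists>v \<alpha> k0 \<sigma>. v \<in> lightcone - {0} \<and> \<sigma> permutes {1..l} \<and> 1 \<le> k0 \<and> k0 \<le> l - 1 \<and>
        (\<forall>i. 1 \<le> i \<and> i < l \<and> i \<noteq> k0 \<longrightarrow> \<alpha> i > \<alpha> (Suc i)) \<and> \<alpha> k0 \<ge> \<alpha> (Suc k0) \<and>
        (\<forall>i\<in>{1..k0}. W (\<sigma> i) = Hpq v (\<alpha> i)) \<and>
        (\<forall>i\<in>{k0+1..l}. W (\<sigma> i) = Hpq (- v) (- \<alpha> i)))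
     \<or>
     (l = 2 \<and> (\<exists>v \<sigma>. \<sigma> permutes {1..l} \<and>
        W (\<sigma> 1) = (\<lambda>u. v + u) ` U_S \<and> W (\<sigma> 2) = (\<lambda>u. v + u) ` U_T))"
    by (rule main_split[OF assms(3) assms(4) part1 part2 neA neB disj])
next
  assume rhs: "(\<exists>v \<alpha> k0 \<sigma>. v \<in> lightcone - {0} \<and> \<sigma> permutes {1..l} \<and> 1 \<le> k0 \<and> k0 \<le> l - 1 \<and>
        (\<forall>i. 1 \<le> i \<and> i < l \<and> i \<noteq> k0 \<longrightarrow> \<alpha> i > \<alpha> (Suc i)) \<and> \<alpha> k0 \<ge> \<alpha> (Suc k0) \<and>
        (\<forall>i\<in>{1..k0}. W (\<sigma> i) = Hpq v (\<alpha> i)) \<and>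
        (\<forall>i\<in>{k0+1..l}. W (\<sigma> i) = Hpq (- v) (- \<alpha> i)))
     \<or>
     (l = 2 \<and> (\<exists>v \<sigma>. \<sigma> permutes {1..l} \<and>
        W (\<sigma> 1) = (\<lambda>u. v + u) ` U_S \<and> W (\<sigma> 2) = (\<lambda>u. v + u) ` U_T))"
  have ne: "\<forall>i\<in>{1..l}. W i \<noteq> {}" using assms(4) by blast
  have ne2: "\<forall>i\<in>{1..l}. W i \<noteq> {} \<and> open (W i)" using assms(4) by blast
  from rhs show "\<not> connected (\<Union>i\<in>{1..l}. W i)"
  proof
    assume "\<exists>v \<alpha> k0 \<sigma>. v \<in> lightcone - {0} \<and> \<sigma> permutes {1..l} \<and> 1 \<le> k0 \<and> k0 \<le> l - 1 \<and>
        (\<forall>i. 1 \<le> i \<and> i < l \<and> i \<noteq> k0 \<longrightarrow> \<alpha> i > \<alpha> (Suc i)) \<and> \<alpha> k0 \<ge> \<alpha> (Suc k0) \<and>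
        (\<forall>i\<in>{1..k0}. W (\<sigma> i) = Hpq v (\<alpha> i)) \<and>
        (\<forall>i\<in>{k0+1..l}. W (\<sigma> i) = Hpq (- v) (- \<alpha> i))"
    then obtain v \<alpha> k0 \<sigma> where h: "v \<in> lightcone - {0}" "\<sigma> permutes {1..l}" "1 \<le> k0" "k0 \<le> l - 1"
        "\<forall>i. 1 \<le> i \<and> i < l \<and> i \<noteq> k0 \<longrightarrow> \<alpha> i > \<alpha> (Suc i)" "\<alpha> k0 \<ge> \<alpha> (Suc k0)"
        "\<forall>i\<in>{1..k0}. W (\<sigma> i) = Hpq v (\<alpha> i)"
        "\<forall>i\<in>{k0+1..l}. W (\<sigma> i) = Hpq (- v) (- \<alpha> i)" by blast
    show ?thesis by (rule disc1[OF ne h])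
  next
    assume "l = 2 \<and> (\<exists>v \<sigma>. \<sigma> permutes {1..l} \<and>
        W (\<sigma> 1) = (\<lambda>u. v + u) ` U_S \<and> W (\<sigma> 2) = (\<lambda>u. v + u) ` U_T)"
    then obtain v \<sigma> where h: "l = 2" "\<sigma> permutes {1..l}"
      "W (\<sigma> 1) = (\<lambda>u. v + u) ` U_S" "W (\<sigma> 2) = (\<lambda>u. v + u) ` U_T" by blast
    show ?thesis by (rule disc2[OF ne2 h])
  qed
qed


end
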